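(* Let $k\ge3$, let $G=(V,E)$ be a $k$-uniform hypergraph with connected components $V_1,\dots,V_s$ ($s\ge1$), and let $\mathbf x\in\mathbb R^n$ be an H-eigenvector of the Laplacian tensor $\mathcal D-\mathcal A$ (respectively, of the signless Laplacian tensor $\mathcal D+\mathcal A$) corresponding to the eigenvalue $0$. Then for every $i\in[s]$ with $\mathbf x(V_i)\ne0$: $\mathbf x(V_i)$ is an H-eigenvector of $(\mathcal D-\mathcal A)(V_i)$ (respectively $(\mathcal D+\mathcal A)(V_i)$) corresponding to the eigenvalue $0$, $\mathrm{sup}(\mathbf x(V_i))=V_i$, and there is a real $c_i\neq0$ with $x_j\in\{c_i,-c_i\}$ for all $j\in V_i$.
   Context: A $k$-uniform hypergraph $G=(V,E)$ has vertex set $V=[n]$ ($n\ge k$) and nonempty edge set $E$ of $k$-element subsets; $E_i=\{e\in E:i\in e\}$, $d_i=|E_i|$. Connected components: maximal sets of vertices pairwise joined by chains of edges with consecutive edges intersecting; an isolated vertex (singleton) is also a component. $\mathcal A$: $a_{i_1\dots i_k}=\frac1{(k-1)!}$ if $\{i_1,\dots,i_k\}\in E$, else $0$; $\mathcal D$ diagonal with $d_{i\dots i}=d_i$; so $((\mathcal D\pm\mathcal A)\mathbf x^{k-1})_i=d_ix_i^{k-1}\pm\sum_{e\in E_i}\prod_{j\in e\setminus\{i\}}x_j$. A nonzero $\mathbf x$ is an eigenvector of $\mathcal T$ for $\lambda$ if $(\mathcal T\mathbf x^{k-1})_i=\lambda x_i^{k-1}$ for all $i$; an H-eigenvector is a real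 eigenvector. $\mathcal T(S)$ is the sub-tensor with indices restricted to $S$, $\mathbf x(S)=(x_j)_{j\in S}$, and $\mathrm{sup}(\mathbf x)=\{i:x_i\ne0\}$. *)

theory Defs
  imports Complex_Main
begin

definition uniform_hypergraph :: "nat \<Rightarrow> nat \<Rightarrow> nat set set \<Rightarrow> bool" where
  "uniform_hypergraph k n E \<longleftrightarrow> n \<ge> k \<and> E \<noteq> {} \<and>
     (\<forall>e\<in>E. e \<subseteq> {1..n} \<and> card e = k)"

definition degree :: "nat set set \<Rightarrow> nat \<Rightarrow> nat" where
  "degree E i = card {e\<in>E. i \<in> e}"

definition adj :: "nat set set \<Rightarrow> (nat \<times> nat) set" where
  "adj E = {(i, j). \<exists>e\<in>E. i \<in> e \<and> j \<in> e}"

text \<open>Connected components of the hypergraph on [n] (isolated vertices are singleton components).\<close>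
definition components :: "nat \<Rightarrow> nat set set \<Rightarrow> nat set set" where
  "components n E = {1..n} // ((adj E)\<^sup>* \<inter> ({1..n} \<times> {1..n}))"

text \<open>Order-k tensors are functions on index lists (of length k).\<close>
type_synonym tensor = "nat list \<Rightarrow> real"

definition adjacency_tensor :: "nat \<Rightarrow> nat set set \<Rightarrow> tensor" where
  "adjacency_tensor k E is =
     (if length is = k \<and> set is \<in> E then 1 / fact (k - 1) else 0)"

definition degree_tensor :: "nat \<Rightarrow> nat set set \<Rightarrow> tensor" where
  "degree_tensor k E is =
     (if length is = k \<and> is \<noteq> [] \<and> (\<forall>j\<in>set is. j = hd is) then real (degree E (hd is)) else 0)"

definition laplacian_tensor :: "nat \<Rightarrow> nat set set \<Rightarrow> tensor" where
  "laplacian_tensor k E is = degree_tensor k E is - adjacency_tensor k E is"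

definition signless_laplacian_tensor :: "nat \<Rightarrow> nat set set \<Rightarrow> tensor" where
  "signless_laplacian_tensor k E is = degree_tensor k E is + adjacency_tensor k E is"

text \<open>(T(S) x(S)^{k-1})_i: the tensor T restricted to the index set S applied to x(S).\<close>
definition tensor_apply :: "nat \<Rightarrow> tensor \<Rightarrow> nat set \<Rightarrow> (nat \<Rightarrow> real) \<Rightarrow> nat \<Rightarrow> real" where
  "tensor_apply k T S x i =
     (\<Sum>js\<in>{js. set js \<subseteq> S \<and> length js = k - 1}. T (i # js) * (\<Prod>l<length js. x (js ! l)))"

definition H_eigenvector :: "nat \<Rightarrow> tensor \<Rightarrow> nat set \<Rightarrow> real \<Rightarrow> (nat \<Rightarrow> real) \<Rightarrow> bool" where
  "H_eigenvector k T S lam x \<longleftrightarrow> (\<exists>i\<in>S. x i \<noteq> 0) \<and>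
     (\<forall>i\<in>S. tensor_apply k T S x i = lam * x i ^ (k - 1))"

definition support_on :: "nat set \<Rightarrow> (nat \<Rightarrow> real) \<Rightarrow> nat set" where
  "support_on S x = {i\<in>S. x i \<noteq> 0}"

end

theory Submission imports Defs "HOL-Combinatorics.Multiset_Permutations" begin

lemma prod_nth_distinct:
  assumes "distinct js"
  shows "(\<Prod>l<length js. x (js!l)) = (\<Prod>j\<in>set js. (x j::real))"
proof -
  have "set js = (!) js ` {..<length js}" by (auto simp: set_conv_nth)
  moreover have "inj_on ((!) js) {..<length js}" using assms by (simp add: inj_on_nth)
  ultimately show ?thesis by (simp add: prod.reindex)
qed

lemma deg_apply:
  assumes k: "k \<ge> 2" and iS: "i \<in> S" and fS: "finite S"
  shows "(\<Sum>js\<in>{js. set js \<subseteq> S \<and> length js = k - 1}. degree_tensor k E (i # js) * (\<Prod>l<length js. x (js ! l)))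
     = real (degree E i) * x i ^ (k - 1)"
proof -
  let ?L = "{js. set js \<subseteq> S \<and> length js = k - 1}"
  let ?r = "replicate (k - 1) i"
  have "(\<Sum>js\<in>?L. degree_tensor k E (i # js) * (\<Prod>l<length js. x (js ! l)))
      = (\<Sum>js\<in>?L. if js = ?r then real (degree E i) * (\<Prod>l<length js. x (js ! l)) else 0)"
  proof (rule sum.cong)
    fix js assume "js \<in> ?L"
    hence len: "length js = k - 1" by auto
    have "(\<forall>j\<in>set (i#js). j = i) \<longleftrightarrow> js = ?r"
      using len by (auto simp: replicate_length_same[symmetric] intro: replicate_eqI)
    then show "degree_tensor k E (i # js) * (\<Prod>l<length js. x (js ! l)) =
       (if js = ?r then real (degree E i) * (\<Prod>l<length js. x (js ! l)) else 0)"
      using len k by (auto simp: degree_tensor_def)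
  qed simp
  also have "\<dots> = real (degree E i) * x i ^ (k - 1)"
    using iS by (auto simp: finite_lists_length_eq[OF fS] set_replicate_conv_if)
  finally show ?thesis .
qed

lemma adj_apply:
  assumes E: "\<forall>e\<in>E. card e = k" and fE: "finite E" and k: "k \<ge> 2" and iS: "i \<in> S" and fS: "finite S"
  shows "(\<Sum>js\<in>{js. set js \<subseteq> S \<and> length js = k - 1}. adjacency_tensor k E (i # js) * (\<Prod>l<length js. x (js ! l)))
     = (\<Sum>e\<in>{e\<in>E. i \<in> e \<and> e \<subseteq> S}. \<Prod>j\<in>e - {i}. x j)"
proof -
  let ?L = "{js. set js \<subseteq> S \<and> length js = k - 1}"
  let ?L' = "{js\<in>?L. set (i # js) \<in> E}"
  let ?T = "{e\<in>E. i \<in> e \<and> e \<subseteq> S}"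
  let ?f = "\<lambda>js. adjacency_tensor k E (i # js) * (\<Prod>l<length js. x (js ! l))"
  have fL: "finite ?L" using finite_lists_length_eq[OF fS] .
  have "sum ?f ?L = sum ?f ?L'"
    by (rule sum.mono_neutral_right[OF fL]) (auto simp: adjacency_tensor_def)
  also have "\<dots> = (\<Sum>e\<in>?T. sum ?f {js. js \<in> ?L' \<and> set (i # js) = e})"
    by (rule sum.group[symmetric]) (use fL fE iS in \<open>auto intro: finite_subset[OF _ fL]\<close>)
  also have "\<dots> = (\<Sum>e\<in>?T. \<Prod>j\<in>e - {i}. x j)"
  proof (rule sum.cong[OF refl])
    fix e assume eT: "e \<in> ?T"
    hence ce: "card e = k" and fe: "finite e" using E k by (auto intro: card_ge_0_finite)
    have ceq: "card (e - {i}) = k - 1" using eT ce fe by auto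
    have set_eq: "{js. js \<in> ?L' \<and> set (i # js) = e} = permutations_of_set (e - {i})"
    proof (intro set_eqI iffI)
      fix js assume "js \<in> {js. js \<in> ?L' \<and> set (i # js) = e}"
      hence len: "length js = k - 1" and se: "insert i (set js) = e" by auto
      have c1: "card (set js) \<le> k - 1" using len card_length by metis
      have "card e \<le> Suc (card (set js))" using se card_insert_le_m1
        by (metis card_insert_if finite_set le_SucI order_refl)
      hence c2: "card (set js) = k - 1" using c1 ce k by linarith
      have ni: "i \<notin> set js"
      proof
        assume "i \<in> set js" hence "set js = e" using se by auto
        thus False using c2 ce k by auto
      qed
      have "distinct js" using c2 len by (simp add: card_distinct)
      moreover have "set js = e - {i}" using se ni by auto
      ultimately show "js \<in> permutations_of_set (e - {i})" by (simp add: permutations_of_set_def)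
    next
      fix js assume "js \<in> permutations_of_set (e - {i})"
      hence d: "distinct js" and s: "set js = e - {i}" by (auto simp: permutations_of_set_def)
      have "length js = k - 1" using distinct_card[OF d] s ceq by simp
      thus "js \<in> {js. js \<in> ?L' \<and> set (i # js) = e}" using s eT by (auto simp: insert_absorb)
    qed
    have "sum ?f (permutations_of_set (e - {i})) = (\<Sum>js\<in>permutations_of_set (e - {i}). (1 / fact (k - 1)) * (\<Prod>j\<in>e - {i}. x j))"
    proof (rule sum.cong[OF refl])
      fix js assume js: "js \<in> permutations_of_set (e - {i})"
      hence d: "distinct js" and s: "set js = e - {i}" by (auto simp: permutations_of_set_def)
      have "length js = k - 1" using distinct_card[OF d] s ceq by simp
      moreover have "set (i # js) = e" using s eT by auto
      ultimately show "?f js = (1 / fact (k - 1)) * (\<Prod>j\<in>e - {i}. x j)"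
        using eT k prod_nth_distinct[OF d, of x] s by (simp add: adjacency_tensor_def)
    qed
    also have "\<dots> = (\<Prod>j\<in>e - {i}. x j)" using fe ceq by simp
    finally show "sum ?f {js. js \<in> ?L' \<and> set (i # js) = e} = (\<Prod>j\<in>e - {i}. x j)" using set_eq by simp
  qed
  finally show ?thesis .
qed

lemma tapp:
  assumes E: "\<forall>e\<in>E. card e = k" and fE: "finite E" and k: "k \<ge> 2" and iS: "i \<in> S" and fS: "finite S"
    and sub: "\<forall>e\<in>E. i \<in> e \<longrightarrow> e \<subseteq> S"
    and T: "T = (\<lambda>is. degree_tensor k E is + \<sigma> * adjacency_tensor k E is)"
  shows "tensor_apply k T S x i = real (degree E i) * x i ^ (k - 1) + \<sigma> * (\<Sum>e\<in>{e\<in>E. i \<in> e}. \<Prod>j\<in>e - {i}. x j)"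
proof -
  have "{e\<in>E. i \<in> e \<and> e \<subseteq> S} = {e\<in>E. i \<in> e}" using sub by auto
  moreover have "tensor_apply k T S x i =
    (\<Sum>js\<in>{js. set js \<subseteq> S \<and> length js = k - 1}. degree_tensor k E (i # js) * (\<Prod>l<length js. x (js ! l)))
    + \<sigma> * (\<Sum>js\<in>{js. set js \<subseteq> S \<and> length js = k - 1}. adjacency_tensor k E (i # js) * (\<Prod>l<length js. x (js ! l)))"
    unfolding tensor_apply_def T by (simp add: sum.distrib sum_distrib_left algebra_simps)
  ultimately show ?thesis using deg_apply[OF k iS fS] adj_apply[OF E fE k iS fS] by simp
qed

lemma prod_eq_max:
  fixes f :: "nat \<Rightarrow> real"
  assumes fA: "finite A" and b: "\<forall>j\<in>A. 0 \<le> f j \<and> f j \<le> m" and eq: "(\<Prod>j\<in>A. f j) = m ^ card A"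
    and m: "m > 0" and jA: "j \<in> A"
  shows "f j = m"
proof (rule ccontr)
  assume "f j \<noteq> m" hence lt: "f j < m" using b jA by auto
  have "(\<Prod>j\<in>A. f j) = f j * (\<Prod>j\<in>A - {j}. f j)" using fA jA by (simp add: prod.remove)
  also have "\<dots> \<le> f j * m ^ card (A - {j})"
  proof (rule mult_left_mono)
    have "(\<Prod>j\<in>A - {j}. f j) \<le> (\<Prod>j\<in>A - {j}. m)" by (rule prod_mono) (use b in auto)
    thus "(\<Prod>j\<in>A - {j}. f j) \<le> m ^ card (A - {j})" by simp
  qed (use b jA in auto)
  also have "\<dots> < m * m ^ card (A - {j})" using lt m by (simp add: mult_strict_right_mono)
  also have "\<dots> = m ^ card A" using fA jA by (metis card_Suc_Diff1 power_Suc)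
  finally show False using eq by simp
qed

theorem corollary4p1:
  fixes k n :: nat and E :: "nat set set" and x :: "nat \<Rightarrow> real" and T :: tensor
  assumes "k \<ge> 3"
    and "uniform_hypergraph k n E"
    and "T = laplacian_tensor k E \<or> T = signless_laplacian_tensor k E"
    and "H_eigenvector k T {1..n} 0 x"
  shows "\<forall>C \<in> components n E. (\<exists>j\<in>C. x j \<noteq> 0) \<longrightarrow>
           H_eigenvector k T C 0 x \<and> support_on C x = C \<and>
           (\<exists>c::real. c \<noteq> 0 \<and> (\<forall>j\<in>C. x j = c \<or> x j = - c))"
proof (intro ballI impI)
  fix C assume CC: "C \<in> components n E" and ex: "\<exists>j\<in>C. x j \<noteq> 0"
  have k: "k \<ge> 2" using assms(1) by simp
  have Esub: "\<forall>e\<in>E. e \<subseteq> {1..n}" and Ecard: "\<forall>e\<in>E. card e = k"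
    using assms(2) by (auto simp: uniform_hypergraph_def)
  have fE: "finite E" by (rule finite_subset[of E "Pow {1..n}"]) (use Esub in auto)
  obtain \<sigma> :: real where sig: "\<bar>\<sigma>\<bar> = 1" and T: "T = (\<lambda>is. degree_tensor k E is + \<sigma> * adjacency_tensor k E is)"
  proof (cases "T = laplacian_tensor k E")
    case True thus ?thesis by (intro that[of "-1"]) (auto simp: fun_eq_iff laplacian_tensor_def)
  next
    case False thus ?thesis using assms(3) by (intro that[of 1]) (auto simp: fun_eq_iff signless_laplacian_tensor_def)
  qed
  let ?R = "(adj E)\<^sup>* \<inter> ({1..n} \<times> {1..n})"
  obtain a where a: "a \<in> {1..n}" and Ca: "C = ?R `` {a}"
    using CC unfolding components_def by (auto elim: quotientE)
  have Cn: "C \<subseteq> {1..n}" using Ca by auto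
  have fC: "finite C" using Cn finite_subset by blast
  have closed: "j \<in> C" if "i \<in> C" "e \<in> E" "i \<in> e" "j \<in> e" for i e j
  proof -
    have "(i, j) \<in> adj E" using that by (auto simp: adj_def)
    moreover have "(a, i) \<in> (adj E)\<^sup>*" using that Ca by auto
    ultimately have "(a, j) \<in> (adj E)\<^sup>*" by auto
    moreover have "j \<in> {1..n}" using that Esub by blast
    ultimately show ?thesis using Ca a by auto
  qed
  have conn: "(j0, j) \<in> (adj E)\<^sup>*" if "j0 \<in> C" "j \<in> C" for j0 j
  proof -
    have "sym (adj E)" by (auto simp: adj_def sym_def)
    hence "sym ((adj E)\<^sup>*)" by (rule sym_rtrancl)
    moreover have "(a, j0) \<in> (adj E)\<^sup>*" "(a, j) \<in> (adj E)\<^sup>*" using that Ca by auto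
    ultimately show ?thesis by (meson rtrancl_trans symD)
  qed
  have app: "tensor_apply k T S x i = real (degree E i) * x i ^ (k - 1) + \<sigma> * (\<Sum>e\<in>{e\<in>E. i \<in> e}. \<Prod>j\<in>e - {i}. x j)"
    if "S = C \<or> S = {1..n}" "i \<in> C" for S i
    by (rule tapp[OF Ecard fE k _ _ _ T]) (use that Cn Esub closed fC in auto)
  have eq0: "real (degree E i) * x i ^ (k - 1) + \<sigma> * (\<Sum>e\<in>{e\<in>E. i \<in> e}. \<Prod>j\<in>e - {i}. x j) = 0"
    if "i \<in> C" for i
    using assms(4) app[of "{1..n}" i] that Cn by (auto simp: H_eigenvector_def)
  define m where "m = Max ((\<lambda>j. \<bar>x j\<bar>) ` C)"
  have mge: "\<bar>x j\<bar> \<le> m" if "j \<in> C" for j using that fC by (auto simp: m_def)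
  obtain j0 where j0: "j0 \<in> C" "\<bar>x j0\<bar> = m"
  proof -
    have "m \<in> (\<lambda>j. \<bar>x j\<bar>) ` C" unfolding m_def using fC ex by (intro Max_in) auto
    thus ?thesis using that by auto
  qed
  have mpos: "m > 0" using ex mge by force
  have stepm: "\<bar>x j\<bar> = m" if "i \<in> C" "\<bar>x i\<bar> = m" "e \<in> E" "i \<in> e" "j \<in> e" for i e j
  proof -
    let ?Ei = "{e\<in>E. i \<in> e}"
    let ?M = "m ^ (k - 1)"
    have fEi: "finite ?Ei" using fE by simp
    have eC: "\<forall>e\<in>?Ei. e \<subseteq> C" using closed that(1) by blast
    have cardi: "\<forall>e\<in>?Ei. card (e - {i}) = k - 1" using Ecard k
      by (auto intro: card_ge_0_finite)
    have fin_e: "\<forall>e\<in>?Ei. finite e" using Ecard k by (auto intro: card_ge_0_finite)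
    have "real (degree E i) * ?M = \<bar>real (degree E i) * x i ^ (k - 1)\<bar>"
      using that(2) by (simp add: abs_mult power_abs)
    also have "\<dots> = \<bar>(\<Sum>e\<in>?Ei. \<Prod>j\<in>e - {i}. x j)\<bar>"
      using eq0[OF that(1)] sig by (simp add: eq_neg_iff_add_eq_0[symmetric] abs_mult)
    also have "\<dots> \<le> (\<Sum>e\<in>?Ei. \<Prod>j\<in>e - {i}. \<bar>x j\<bar>)"
      by (rule order_trans[OF sum_abs]) (simp add: abs_prod)
    finally have le1: "real (degree E i) * ?M \<le> (\<Sum>e\<in>?Ei. \<Prod>j\<in>e - {i}. \<bar>x j\<bar>)" .
    have pe: "(\<Prod>j\<in>e - {i}. \<bar>x j\<bar>) \<le> ?M" if "e \<in> ?Ei" for e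
    proof -
      have "(\<Prod>j\<in>e - {i}. \<bar>x j\<bar>) \<le> (\<Prod>j\<in>e - {i}. m)"
        by (rule prod_mono) (use that eC mge in auto)
      thus ?thesis using cardi that by simp
    qed
    have "(\<Sum>e\<in>?Ei. ?M - (\<Prod>j\<in>e - {i}. \<bar>x j\<bar>)) = real (degree E i) * ?M - (\<Sum>e\<in>?Ei. \<Prod>j\<in>e - {i}. \<bar>x j\<bar>)"
      by (simp add: sum_subtractf degree_def)
    also have "\<dots> \<le> 0" using le1 by simp
    finally have "(\<Sum>e\<in>?Ei. ?M - (\<Prod>j\<in>e - {i}. \<bar>x j\<bar>)) = 0"
      using sum_nonneg[of ?Ei "\<lambda>e. ?M - (\<Prod>j\<in>e - {i}. \<bar>x j\<bar>)"] pe by force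
    hence "\<forall>e\<in>?Ei. ?M - (\<Prod>j\<in>e - {i}. \<bar>x j\<bar>) = 0"
      using sum_nonneg_eq_0_iff[OF fEi, of "\<lambda>e. ?M - (\<Prod>j\<in>e - {i}. \<bar>x j\<bar>)"] pe by simp
    hence peq: "(\<Prod>j\<in>e - {i}. \<bar>x j\<bar>) = m ^ card (e - {i})" using that cardi by auto
    show ?thesis
    proof (cases "j = i")
      case True thus ?thesis using that by simp
    next
      case False
      show ?thesis
        by (rule prod_eq_max[OF _ _ peq mpos]) (use that False fin_e eC mge in auto)
    qed
  qed
  have allm: "\<bar>x j\<bar> = m" if "j \<in> C" for j
  proof -
    have "(j0, j) \<in> (adj E)\<^sup>*" using conn j0(1) that by blast
    hence "j \<in> C \<and> \<bar>x j\<bar> = m"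
    proof (induction rule: rtrancl_induct)
      case base thus ?case using j0 by simp
    next
      case (step y z)
      then obtain e where e: "e \<in> E" "y \<in> e" "z \<in> e" by (auto simp: adj_def)
      thus ?case using step.IH closed[of y e z] stepm[of y e z] by auto
    qed
    thus ?thesis by simp
  qed
  show "H_eigenvector k T C 0 x \<and> support_on C x = C \<and>
           (\<exists>c::real. c \<noteq> 0 \<and> (\<forall>j\<in>C. x j = c \<or> x j = - c))"
  proof (intro conjI)
    show "H_eigenvector k T C 0 x"
      unfolding H_eigenvector_def using ex app[of C] eq0 by auto
    show "support_on C x = C" using allm mpos by (force simp: support_on_def)
    show "\<exists>c::real. c \<noteq> 0 \<and> (\<forall>j\<in>C. x j = c \<or> x j = - c)"
      using allm mpos by (intro exI[of _ m]) (metis abs_if less_irrefl minus_minus)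
  qed
qed

end
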